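(* Let $\alpha\in(0,1)$ and $\nu\in\mathbb{N}$ with $2\nu>1/(1-\alpha)$, and let $K_{\alpha,\nu}(x)=\sum_{k=0}^{\infty}2^{-2\alpha\nu k}\phi(2^{2\nu k}x)$, where $\phi$ is the $2$-periodic function with $\phi(x)=|x|$ on $[-1,1]$. Then for every $x\in\mathbb{R}$ and every $\beta\in(\alpha,1]$, \[ \limsup_{t\to0}\frac{|K_{\alpha,\nu}(x+t)-K_{\alpha,\nu}(x)|}{|t|^{\beta}}=+\infty; \] hence $K_{\alpha,\nu}$ is at no point pointwise H\"older continuous of order $\beta$, and in particular (case $\beta=1$) $K_{\alpha,\nu}$ is differentiable at no point of $\mathbb{R}$. Moreover, for every $M\ge1$, \[ \limsup_{t\to0}\frac{1}{2M}\int_{-M}^{M}\left|\frac{K_{\alpha,\nu}(x+t)-K_{\alpha,\nu}(x)}{t}\right|dx=+\infty, \] so the difference quotients of $K_{\alpha,\nu}$ are unbounded in $L^1_{loc}(\mathbb{R})$ and the distributional derivative of $K_{\alpha,\nu}$ is not a signed (Radon) measure, i.e. $K_{\alpha,\nu}$ is not of locally bounded variation.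
   Context: A function $f\in C^0(\mathbb{R})$ is called (pointwise) H\"older continuous of order $\beta$ at $x$ if there exist $r,C>0$ with $|f(y)-f(x)|\le C|y-x|^{\beta}$ for all $y\in[x-r,x+r]$. *)

theory Defs
  imports "HOL-Analysis.Analysis"
begin

text \<open>The 2-periodic function with phi x = |x| on [-1,1] (distance to the nearest even integer).\<close>
definition phi :: "real \<Rightarrow> real" where
  "phi x = \<bar>x - 2 * real_of_int \<lfloor>(x + 1) / 2\<rfloor>\<bar>"

definition K :: "real \<Rightarrow> nat \<Rightarrow> real \<Rightarrow> real" where
  "K \<alpha> \<nu> x = (\<Sum>k. 2 powr (- 2 * \<alpha> * real \<nu> * real k) * phi (2 ^ (2 * \<nu> * k) * x))"

definition holder_at :: "(real \<Rightarrow> real) \<Rightarrow> real \<Rightarrow> real \<Rightarrow> bool" where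
  "holder_at f \<beta> x \<longleftrightarrow> (\<exists>r>0. \<exists>C>0. \<forall>y\<in>{x - r..x + r}. \<bar>f y - f x\<bar> \<le> C * \<bar>y - x\<bar> powr \<beta>)"

definition bv_on :: "(real \<Rightarrow> real) \<Rightarrow> real \<Rightarrow> real \<Rightarrow> bool" where
  "bv_on f a b \<longleftrightarrow> (\<exists>B. \<forall>(n::nat) (xs::nat \<Rightarrow> real).
      (\<forall>i\<le>n. a \<le> xs i \<and> xs i \<le> b) \<and> (\<forall>i<n. xs i \<le> xs (Suc i)) \<longrightarrow>
      (\<Sum>i<n. \<bar>f (xs (Suc i)) - f (xs i)\<bar>) \<le> B)"

definition locally_bv :: "(real \<Rightarrow> real) \<Rightarrow> bool" where
  "locally_bv f \<longleftrightarrow> (\<forall>a b. bv_on f a b)"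

end

theory Submission imports Defs begin

lemma phi_alt: "phi x = \<bar>x - 2 * of_int \<lfloor>(x + 1) / 2\<rfloor>\<bar>" by (simp add: phi_def)

lemma floor_bounds2: "-1 \<le> x - 2 * real_of_int \<lfloor>(x + 1) / 2\<rfloor> \<and> x - 2 * real_of_int \<lfloor>(x + 1) / 2\<rfloor> < 1"
proof -
  have "real_of_int \<lfloor>(x + 1) / 2\<rfloor> \<le> (x+1)/2" by (rule of_int_floor_le)
  moreover have "(x+1)/2 < real_of_int \<lfloor>(x + 1) / 2\<rfloor> + 1" by (rule real_of_int_floor_add_one_gt)
  moreover have "x = 2*((x+1)/2) - 1" by (simp add: field_simps)
  ultimately show ?thesis by linarith
qed

lemma phi_nonneg: "0 \<le> phi x" by (simp add: phi_def)
lemma phi_le1: "phi x \<le> 1" using floor_bounds2[of x] unfolding phi_def by linarith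

lemma phi_le_even: "phi x \<le> \<bar>x - 2 * of_int m\<bar>"
proof -
  let ?f = "\<lfloor>(x + 1) / 2\<rfloor>"
  have b: "\<bar>x - 2 * of_int ?f\<bar> \<le> 1" using floor_bounds2[of x] by linarith
  show ?thesis
  proof (cases "m = ?f")
    case True thus ?thesis by (simp add: phi_def)
  next
    case False
    hence "1 \<le> \<bar>real_of_int m - real_of_int ?f\<bar>"
      by (metis of_int_1_le_iff of_int_abs of_int_diff zero_less_abs_iff int_one_le_iff_zero_less eq_iff_diff_eq_0)
    hence "\<bar>x - 2 * of_int m\<bar> \<ge> 1" using b by linarith
    thus ?thesis using b by (simp add: phi_def)
  qed
qed

lemma phi_eq: "\<bar>z - 2 * of_int k\<bar> \<le> 1 \<Longrightarrow> phi z = \<bar>z - 2 * of_int k\<bar>"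
proof -
  assume a: "\<bar>z - 2 * of_int k\<bar> \<le> 1"
  let ?f = "\<lfloor>(z + 1) / 2\<rfloor>"
  have b: "-1 \<le> z - 2 * of_int ?f" "z - 2 * of_int ?f < 1" using floor_bounds2[of z] by auto
  show ?thesis
  proof (cases "k = ?f")
    case True thus ?thesis by (simp add: phi_def)
  next
    case False
    hence "1 \<le> \<bar>real_of_int k - real_of_int ?f\<bar>"
      by (metis of_int_1_le_iff of_int_abs of_int_diff zero_less_abs_iff int_one_le_iff_zero_less eq_iff_diff_eq_0)
    hence "\<bar>z - 2 * of_int ?f\<bar> \<ge> 1" using a by linarith
    hence "\<bar>z - 2 * of_int ?f\<bar> = 1" using b by linarith
    moreover have "phi z \<le> \<bar>z - 2 * of_int k\<bar>" by (rule phi_le_even)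
    ultimately show ?thesis using a by (simp add: phi_def)
  qed
qed

lemma phi_lip: "\<bar>phi x - phi y\<bar> \<le> \<bar>x - y\<bar>"
proof -
  have "phi y \<le> phi x + \<bar>x - y\<bar>" using phi_le_even[of y "\<lfloor>(x + 1) / 2\<rfloor>"] by (simp add: phi_def)
  moreover have "phi x \<le> phi y + \<bar>x - y\<bar>" using phi_le_even[of x "\<lfloor>(y + 1) / 2\<rfloor>"] by (simp add: phi_def)
  ultimately show ?thesis by linarith
qed

lemma phi_per: "phi (z + 2 * of_int m) = phi z"
proof -
  have "\<lfloor>(z + 2 * of_int m + 1) / 2\<rfloor> = \<lfloor>(z + 1) / 2\<rfloor> + m"
  proof -
    have "(z + 2 * of_int m + 1) / 2 = (z+1)/2 + of_int m" by (simp add: field_simps)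
    thus ?thesis by (metis floor_add_int)
  qed
  thus ?thesis by (simp add: phi_def algebra_simps)
qed

lemma phi_affine:
  assumes "of_int m \<le> z" "z \<le> of_int m + 1"
  shows "phi z = (if even m then z - of_int m else of_int m + 1 - z)"
proof (cases "even m")
  case True then obtain k where k: "m = 2*k" by auto
  have "phi z = \<bar>z - 2 * of_int k\<bar>" by (rule phi_eq) (use assms k in auto)
  thus ?thesis using assms k True by auto
next
  case False
  hence "even (m+1)" by simp
  then obtain k where k: "m + 1 = 2*k" by (rule evenE)
  have k': "real_of_int m + 1 = 2 * real_of_int k"
  proof -
    have "real_of_int (m+1) = real_of_int (2*k)" using k by simp
    thus ?thesis by simp
  qed
  have "phi z = \<bar>z - 2 * of_int k\<bar>" by (rule phi_eq) (use assms k' in auto)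
  hence "phi z = 2 * of_int k - z" using assms k' by auto
  thus ?thesis using False k' by auto
qed

lemma phi_half_plus:
  assumes "of_int m \<le> y" "y \<le> of_int m + 1/2"
  shows "\<bar>phi (y + 1/2) - phi y\<bar> = 1/2"
  using phi_affine[of m y] phi_affine[of m "y+1/2"] assms by auto

lemma phi_half_minus:
  assumes "of_int m + 1/2 \<le> y" "y \<le> of_int m + 1"
  shows "\<bar>phi (y - 1/2) - phi y\<bar> = 1/2"
  using phi_affine[of m y] phi_affine[of m "y-1/2"] assms by auto

lemma phi_half_exists: "\<exists>s::int. (s = 1 \<or> s = -1) \<and> \<bar>phi (y + of_int s/2) - phi y\<bar> = 1/2"
proof (cases "y \<le> of_int \<lfloor>y\<rfloor> + 1/2")
  case True
  hence "\<bar>phi (y + 1/2) - phi y\<bar> = 1/2" by (intro phi_half_plus[of "\<lfloor>y\<rfloor>"]) auto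
  thus ?thesis by (intro exI[of _ 1]) auto
next
  case False
  hence "\<bar>phi (y - 1/2) - phi y\<bar> = 1/2"
    by (intro phi_half_minus[of "\<lfloor>y\<rfloor>"]) (auto intro: less_imp_le real_of_int_floor_add_one_gt)
  thus ?thesis by (intro exI[of _ "-1"]) auto
qed

definition F :: "real \<Rightarrow> real \<Rightarrow> real \<Rightarrow> real" where
  "F a b x = (\<Sum>k. a^k * phi (b^k * x))"

lemma F_summable:
  assumes "0 \<le> a" "a < 1"
  shows "summable (\<lambda>k. a^k * phi (b^k * x))"
proof (rule summable_comparison_test[of _ "\<lambda>k. a^k"])
  show "\<exists>N. \<forall>n\<ge>N. norm (a ^ n * phi (b ^ n * x)) \<le> a ^ n"
    using assms phi_le1 phi_nonneg by (auto intro!: mult_left_le)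
  show "summable (\<lambda>k. a^k)" using assms by (simp add: summable_geometric)
qed

lemma tail_zero:
  assumes "b = 4^N" "1 \<le> N" "n < k"
  shows "phi (b^k * (x + of_int s / (2 * b^n))) = phi (b^k * x)"
proof -
  define j where "j = N * (k - n)"
  have j1: "1 \<le> j" using assms by (simp add: j_def)
  have "b^k = b^n * b^(k-n)" using assms by (simp add: power_add[symmetric])
  also have "b^(k-n) = 4^j" using assms by (simp add: j_def power_mult)
  also have "(4::real)^j = 4 * 4^(j-1)" using j1 by (metis power_eq_if not_one_le_zero)
  finally have bk: "b^k = b^n * (4 * 4^(j-1))" .
  have bn: "b^n > 0" using assms by simp
  have "b > 0" using assms by simp
  have "b^k * (x + of_int s / (2 * b^n)) = b^k * x + 2 * of_int (s * 4^(j-1))"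
    using bn \<open>b > 0\<close> by (simp add: bk field_simps)
  thus ?thesis using phi_per[of "b^k*x" "s * 4^(j-1)"] by simp
qed

lemma geo_bound:
  fixes q :: real
  assumes "q > 1"
  shows "(\<Sum>k<n. q^k) \<le> q^n / (q - 1)"
proof (induction n)
  case 0
  have "0 < q - 1" using assms by simp
  thus ?case by simp
next
  case (Suc n)
  have "(\<Sum>k<Suc n. q^k) = (\<Sum>k<n. q^k) + q^n" by simp
  also have "\<dots> \<le> q^n/(q-1) + q^n" using Suc by simp
  also have "\<dots> = q^Suc n / (q-1)" using assms by (simp add: field_simps)
  finally show ?case .
qed

lemma key:
  assumes a0: "0 < a" and a1: "a < 1" and bN: "b = 4^N" and N1: "1 \<le> N" and ab: "a * b > 2"
    and s: "s = 1 \<or> s = -1" and half: "\<bar>phi (b^n * x + of_int s / 2) - phi (b^n * x)\<bar> = 1/2"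
  shows "\<bar>F a b (x + of_int s / (2 * b^n)) - F a b x\<bar> \<ge> (a*b - 2) / (2*(a*b - 1)) * a^n"
proof -
  define h where "h = of_int s / (2 * b^n)"
  have bpos: "b \<ge> 4" using bN power_increasing[OF N1, of "4::real"] by simp
  have bn: "b^n > 0" using bpos by simp
  have habs: "\<bar>h\<bar> = 1 / (2 * b^n)" using s bn by (auto simp: h_def)
  define d where "d k = a^k * (phi (b^k * (x + h)) - phi (b^k * x))" for k
  have "F a b (x + h) - F a b x = (\<Sum>k. a^k * phi (b^k * (x + h)) - a^k * phi (b^k * x))"
    unfolding F_def using a0 a1 by (intro suminf_diff F_summable) auto
  also have "\<dots> = suminf d" by (rule arg_cong[where f=suminf]) (simp add: fun_eq_iff d_def right_diff_distrib)
  also have "\<dots> = (\<Sum>k\<in>{..n}. d k)"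
  proof (rule suminf_finite)
    fix k assume "k \<notin> {..n}"
    hence "n < k" by simp
    thus "d k = 0" unfolding d_def h_def using tail_zero[OF bN N1] by simp
  qed simp
  also have "\<dots> = (\<Sum>k<n. d k) + d n" by (simp add: lessThan_Suc_atMost[symmetric])
  finally have eq: "F a b (x + h) - F a b x = (\<Sum>k<n. d k) + d n" .
  have "b^n * (x + h) = b^n * x + of_int s / 2" using bn bpos by (simp add: h_def field_simps)
  hence dn: "\<bar>d n\<bar> = a^n / 2" using half a0 by (simp add: d_def abs_mult)
  have "\<bar>\<Sum>k<n. d k\<bar> \<le> (\<Sum>k<n. \<bar>d k\<bar>)" by (rule sum_abs)
  also have "\<dots> \<le> (\<Sum>k<n. (a*b)^k * \<bar>h\<bar>)"
  proof (rule sum_mono)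
    fix k
    have "\<bar>phi (b^k * (x + h)) - phi (b^k * x)\<bar> \<le> \<bar>b^k * (x + h) - b^k * x\<bar>" by (rule phi_lip)
    also have "\<dots> = b^k * \<bar>h\<bar>" using bpos by (simp add: algebra_simps abs_mult)
    finally have "\<bar>phi (b^k * (x + h)) - phi (b^k * x)\<bar> \<le> b^k * \<bar>h\<bar>" .
    hence "a^k * \<bar>phi (b^k * (x + h)) - phi (b^k * x)\<bar> \<le> a^k * (b^k * \<bar>h\<bar>)"
      using a0 by (intro mult_left_mono) auto
    thus "\<bar>d k\<bar> \<le> (a*b)^k * \<bar>h\<bar>" using a0 by (simp add: d_def abs_mult power_mult_distrib)
  qed
  also have "\<dots> = (\<Sum>k<n. (a*b)^k) * \<bar>h\<bar>" by (simp add: sum_distrib_right)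
  also have "\<dots> \<le> (a*b)^n / (a*b - 1) * \<bar>h\<bar>" using geo_bound[of "a*b" n] ab by (intro mult_right_mono) auto
  also have "\<dots> = a^n / (2*(a*b-1))"
  proof -
    have "a*b - 1 \<noteq> 0" using ab by simp
    thus ?thesis using bn bpos unfolding habs by (simp add: power_mult_distrib field_simps)
  qed
  finally have S: "\<bar>\<Sum>k<n. d k\<bar> \<le> a^n / (2*(a*b-1))" .
  have "(a*b - 2) / (2*(a*b - 1)) * a^n = a^n/2 - a^n / (2*(a*b-1))" using ab by (simp add: field_simps)
  also have "\<dots> \<le> \<bar>(\<Sum>k<n. d k) + d n\<bar>" using S dn by linarith
  finally show ?thesis using eq h_def by simp
qed

lemma phi_cont: "continuous_on UNIV phi"
proof (rule lipschitz_on_continuous_on)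
  show "1-lipschitz_on UNIV phi"
    by (rule lipschitz_onI) (auto simp: dist_real_def phi_lip)
qed

lemma Limsup_at0_infty:
  fixes f :: "real \<Rightarrow> real"
  assumes "\<And>B d. d > 0 \<Longrightarrow> \<exists>t. t \<noteq> 0 \<and> \<bar>t\<bar> < d \<and> B \<le> f t"
  shows "Limsup (at 0) (\<lambda>t. ereal (f t)) = \<infinity>"
  unfolding Limsup_def
proof (rule ereal_top, rule INF_greatest)
  fix B0 :: real and P assume "P \<in> {P. eventually P (at (0::real))}"
  then obtain d where d: "d > 0" "\<And>t. t \<noteq> 0 \<and> dist t 0 < d \<Longrightarrow> P t"
    by (auto simp: eventually_at)
  have "(SUP t\<in>Collect P. ereal (f t)) = \<infinity>"
  proof (rule ereal_top)
    fix B
    obtain t where t: "t \<noteq> 0" "\<bar>t\<bar> < d" "B \<le> f t" using assms d(1) by blast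
    hence "P t" using d(2) by auto
    hence "ereal (f t) \<le> (SUP t\<in>Collect P. ereal (f t))" by (intro SUP_upper) auto
    thus "ereal B \<le> (SUP t\<in>Collect P. ereal (f t))" using t(3) by (meson ereal_less_eq(3) order.trans)
  qed
  thus "ereal B0 \<le> (SUP t\<in>Collect P. ereal (f t))" by simp
qed

lemma choose_n:
  fixes q b c B d :: real
  assumes "q > 1" "b > 1" "c > 0" "d > 0"
  shows "\<exists>n. B \<le> c * q^n \<and> 1 / (2 * b^n) < d"
proof -
  obtain n1 where n1: "B / c < q^n1" using real_arch_pow[OF assms(1)] by blast
  obtain n2 where n2: "1 / d < b^n2" using real_arch_pow[OF assms(2)] by blast
  have "q^n1 \<le> q^(n1+n2)" using assms by (intro power_increasing) auto
  hence "c * q^n1 \<le> c * q^(n1+n2)" using assms(3) by (intro mult_left_mono) auto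
  moreover have "B < c * q^n1" using n1 assms(3) by (simp add: field_simps)
  ultimately have "B \<le> c * q^(n1+n2)" by linarith
  moreover have "b^n2 \<le> b^(n1+n2)" using assms by (intro power_increasing) auto
  hence "1 / d < b^(n1+n2)" using n2 by linarith
  hence "1 / b^(n1+n2) < d" using assms by (simp add: field_simps)
  hence "1 / (2 * b^(n1+n2)) < d" using assms
    by (smt (verit) divide_pos_pos frac_le mult_pos_pos zero_less_power)
  ultimately show ?thesis by blast
qed

lemma sum_even_odd: fixes L :: nat and t :: "nat \<Rightarrow> 'a::comm_monoid_add"
  shows "(\<Sum>i<2*L. t i) = (\<Sum>j<L. t (2*j) + t (2*j+1))"
  by (induction L) (auto simp: mult_2 add.assoc)

context
  fixes a b \<alpha> :: real and N :: nat
  assumes \<alpha>0: "0 < \<alpha>" and \<alpha>1: "\<alpha> < 1" and bN: "b = 4^N" and N1: "1 \<le> N"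
    and aDef: "a = b powr (-\<alpha>)" and ab: "a * b > 2"
begin

lemma b4: "b \<ge> 4" using bN power_increasing[OF N1, of "4::real"] by simp

lemma a_pos: "a > 0" using aDef b4 by simp

lemma a_lt1: "a < 1"
proof -
  have "b powr (-\<alpha>) < b powr 0" using b4 \<alpha>0 by (intro powr_less_mono) auto
  thus ?thesis using aDef b4 by simp
qed

definition "cc = (a*b - 2) / (2*(a*b - 1))"

lemma cc_pos: "cc > 0" using ab by (simp add: cc_def)

lemma key_ex: "\<exists>t. \<bar>t\<bar> = 1 / (2 * b^n) \<and> t \<noteq> 0 \<and> \<bar>F a b (x + t) - F a b x\<bar> \<ge> cc * a^n"
proof -
  obtain s :: int where s: "s = 1 \<or> s = -1" "\<bar>phi (b^n * x + of_int s/2) - phi (b^n * x)\<bar> = 1/2"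
    using phi_half_exists by blast
  have k: "\<bar>F a b (x + of_int s / (2 * b^n)) - F a b x\<bar> \<ge> cc * a^n"
    unfolding cc_def by (rule key[OF a_pos a_lt1 bN N1 ab s])
  have bn: "b^n > 0" using b4 by simp
  show ?thesis
    by (rule exI[of _ "of_int s / (2 * b^n)"]) (use k s bn b4 in auto)
qed

lemma F_cont: "continuous_on UNIV (F a b)"
proof -
  have ul: "uniform_limit UNIV (\<lambda>n x. \<Sum>i<n. a^i * phi (b^i * x)) (\<lambda>x. suminf (\<lambda>i. a^i * phi (b^i * x))) sequentially"
  proof (rule Weierstrass_m_test)
    show "summable (\<lambda>i. a^i)" using a_pos a_lt1 by (simp add: summable_geometric)
    fix n x
    show "norm (a^n * phi (b^n * x)) \<le> a^n"
      using a_pos phi_le1 phi_nonneg by (auto intro!: mult_left_le)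
  qed
  have "continuous_on UNIV (\<lambda>x. suminf (\<lambda>i. a^i * phi (b^i * x)))"
  proof (rule uniform_limit_theorem[OF _ ul])
    show "\<forall>\<^sub>F n in sequentially. continuous_on UNIV (\<lambda>x. \<Sum>i<n. a^i * phi (b^i * x))"
      by (intro always_eventually allI continuous_intros continuous_on_compose2[OF phi_cont]) auto
  qed simp
  thus ?thesis unfolding F_def[abs_def] by simp
qed

lemma bn_powr: "(b^n) powr \<beta> = (b powr \<beta>)^n"
proof -
  have "(b^n) powr \<beta> = (b powr real n) powr \<beta>" using b4 by (simp add: powr_realpow)
  also have "\<dots> = b powr (real n * \<beta>)" by (simp add: powr_powr)
  also have "\<dots> = (b powr \<beta>)^n" using b4 by (simp add: powr_power)
  finally show ?thesis .
qed

lemma ratio: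
  assumes "\<alpha> < \<beta>" "d > 0"
  shows "\<exists>t. t \<noteq> 0 \<and> \<bar>t\<bar> < d \<and> B \<le> \<bar>F a b (x + t) - F a b x\<bar> / \<bar>t\<bar> powr \<beta>"
proof -
  define q where "q = b powr (\<beta> - \<alpha>)"
  have "b powr 0 < b powr (\<beta> - \<alpha>)" using b4 assms(1) by (intro powr_less_mono) auto
  hence q1: "q > 1" using b4 unfolding q_def by simp
  have aq: "a * b powr \<beta> = q" unfolding q_def aDef by (simp add: powr_add[symmetric])
  obtain n where n: "B \<le> cc * q^n" "1 / (2 * b^n) < d"
  proof -
    have "b > 1" using b4 by simp
    from choose_n[OF q1 this cc_pos assms(2), of B] show ?thesis using that by blast
  qed
  obtain t where t: "\<bar>t\<bar> = 1 / (2 * b^n)" "t \<noteq> 0" "\<bar>F a b (x + t) - F a b x\<bar> \<ge> cc * a^n"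
    using key_ex by blast
  have bn: "b^n > 0" using b4 by simp
  have "\<bar>t\<bar> powr \<beta> \<le> (1 / b^n) powr \<beta>"
    unfolding t(1) using assms bn \<alpha>0 by (intro powr_mono2) (auto simp: field_simps)
  also have "\<dots> = 1 / (b powr \<beta>)^n" by (simp add: powr_divide bn_powr)
  finally have tp: "\<bar>t\<bar> powr \<beta> \<le> 1 / (b powr \<beta>)^n" .
  have tpos: "\<bar>t\<bar> powr \<beta> > 0" using t(2) by simp
  have bbpos: "(b powr \<beta>)^n > 0" using b4 by simp
  have "cc * q^n = cc * a^n / (1 / (b powr \<beta>)^n)" unfolding aq[symmetric]
    by (simp add: power_mult_distrib)
  also have "\<dots> \<le> cc * a^n / \<bar>t\<bar> powr \<beta>"
    using tp tpos cc_pos a_pos bbpos by (intro divide_left_mono) auto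
  also have "\<dots> \<le> \<bar>F a b (x + t) - F a b x\<bar> / \<bar>t\<bar> powr \<beta>"
    using t(3) tpos by (intro divide_right_mono) auto
  finally show ?thesis using n t by (intro exI[of _ t]) auto
qed

lemma not_holder:
  assumes "\<alpha> < \<beta>"
  shows "\<not> holder_at (F a b) \<beta> x"
proof
  assume "holder_at (F a b) \<beta> x"
  then obtain r C where rC: "r > 0" "C > 0" "\<And>y. y \<in> {x - r..x + r} \<Longrightarrow> \<bar>F a b y - F a b x\<bar> \<le> C * \<bar>y - x\<bar> powr \<beta>"
    unfolding holder_at_def by blast
  obtain t where t: "t \<noteq> 0" "\<bar>t\<bar> < r" "C + 1 \<le> \<bar>F a b (x + t) - F a b x\<bar> / \<bar>t\<bar> powr \<beta>"
    using ratio[OF assms rC(1)] by blast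
  have "\<bar>F a b (x + t) - F a b x\<bar> \<le> C * \<bar>t\<bar> powr \<beta>" using rC(3)[of "x+t"] t(2) by (simp add: abs_less_iff)
  moreover have "\<bar>t\<bar> powr \<beta> > 0" using t(1) by simp
  ultimately have "\<bar>F a b (x + t) - F a b x\<bar> / \<bar>t\<bar> powr \<beta> \<le> C" by (simp add: field_simps)
  thus False using t(3) by linarith
qed

lemma Limsup_ratio:
  assumes "\<alpha> < \<beta>"
  shows "Limsup (at 0) (\<lambda>t. ereal (\<bar>F a b (x + t) - F a b x\<bar> / \<bar>t\<bar> powr \<beta>)) = \<infinity>"
  by (rule Limsup_at0_infty) (use ratio[OF assms] in blast)

lemma diff_holder:
  assumes "f differentiable (at x)"
  shows "holder_at f 1 x"
proof -
  have "(f has_field_derivative deriv f x) (at x)"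
    using assms DERIV_deriv_iff_real_differentiable by blast
  hence "((\<lambda>y. (f y - f x) / (y - x)) \<longlongrightarrow> deriv f x) (at x)"
    by (simp add: has_field_derivative_iff)
  hence "eventually (\<lambda>y. dist ((f y - f x) / (y - x)) (deriv f x) < 1) (at x)"
    by (rule tendstoD) simp
  then obtain d where d: "d > 0" "\<And>y. y \<noteq> x \<and> dist y x < d \<Longrightarrow> dist ((f y - f x) / (y - x)) (deriv f x) < 1"
    by (auto simp: eventually_at)
  define C where "C = \<bar>deriv f x\<bar> + 1"
  have "\<forall>y\<in>{x - d/2..x + d/2}. \<bar>f y - f x\<bar> \<le> C * \<bar>y - x\<bar> powr 1"
  proof
    fix y assume y: "y \<in> {x - d/2..x + d/2}"
    show "\<bar>f y - f x\<bar> \<le> C * \<bar>y - x\<bar> powr 1"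
    proof (cases "y = x")
      case True thus ?thesis by simp
    next
      case False
      hence "dist ((f y - f x) / (y - x)) (deriv f x) < 1" using d y by (auto simp: dist_real_def)
      hence "\<bar>(f y - f x) / (y - x)\<bar> \<le> C" unfolding C_def dist_real_def by linarith
      hence "\<bar>f y - f x\<bar> / \<bar>y - x\<bar> \<le> C" by (simp add: abs_divide)
      thus ?thesis using False by (simp add: field_simps)
    qed
  qed
  moreover have "C > 0" by (simp add: C_def)
  ultimately show ?thesis unfolding holder_at_def using d(1) by (intro exI[of _ "d/2"]) auto
qed

lemma not_diff: "\<not> (F a b) differentiable (at x)"
  using diff_holder not_holder[of 1] \<alpha>1 by blast

lemma good_point:
  assumes "of_int j \<le> b^n * x" "b^n * x \<le> of_int j + 1/2"
  shows "\<bar>F a b (x + 1 / (2 * b^n)) - F a b x\<bar> \<ge> cc * a^n"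
proof -
  have "\<bar>phi (b^n * x + of_int 1 / 2) - phi (b^n * x)\<bar> = 1/2"
    using phi_half_plus[OF assms] by simp
  from key[OF a_pos a_lt1 bN N1 ab _ this] show ?thesis unfolding cc_def by simp
qed

lemma L_ex: "\<exists>L::nat. real L = b^n \<and> L > 0"
  by (rule exI[of _ "4^(N*n)"]) (simp add: bN power_mult)

lemma g_cont: "continuous_on UNIV (\<lambda>x. \<bar>(F a b (x + t) - F a b x) / t\<bar>)"
proof -
  have "continuous_on UNIV (\<lambda>x. F a b (x + t))"
    by (rule continuous_on_compose2[OF F_cont]) (auto intro: continuous_intros)
  thus ?thesis using F_cont unfolding divide_inverse by (intro continuous_intros) auto
qed

lemma g_int: "(\<lambda>x. \<bar>(F a b (x + t) - F a b x) / t\<bar>) integrable_on {u..v}"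
  by (rule integrable_continuous_interval) (rule continuous_on_subset[OF g_cont], simp)

lemma int_lower:
  shows "integral {0..1} (\<lambda>x. \<bar>(F a b (x + 1/(2*b^n)) - F a b x) / (1/(2*b^n))\<bar>) \<ge> cc * (a*b)^n"
proof -
  define t where "t = 1/(2*b^n)"
  define g where "g x = \<bar>(F a b (x + t) - F a b x) / t\<bar>" for x
  obtain L :: nat where L: "real L = b^n" "L > 0" using L_ex by blast
  have bn: "b^n > 0" using b4 by simp
  have gi: "\<And>u v. g integrable_on {u..v}" unfolding g_def[abs_def] by (rule g_int)
  have g0: "\<And>x. g x \<ge> 0" by (simp add: g_def)
  have gl: "g x \<ge> 2 * b^n * (cc * a^n)" if "of_int j \<le> b^n * x" "b^n * x \<le> of_int j + 1/2" for x j
  proof -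
    have "g x = 2 * b^n * \<bar>F a b (x + t) - F a b x\<bar>" using bn by (simp add: g_def t_def abs_mult)
    thus ?thesis using good_point[OF that] bn unfolding t_def by (simp add: mult_left_mono)
  qed
  have main: "J \<le> L \<Longrightarrow> integral {0..real J / real L} g \<ge> real J * (cc * a^n)" for J
  proof (induction J)
    case 0 thus ?case by simp
  next
    case (Suc J)
    let ?u = "real J / real L" and ?m = "(real J + 1/2) / real L" and ?v = "real (Suc J) / real L"
    have Lp: "real L > 0" using L by simp
    have o1: "0 \<le> ?u" "?u \<le> ?m" "?m \<le> ?v" using Lp by (auto simp: field_simps)
    have "integral {?u..?m} g \<ge> integral {?u..?m} (\<lambda>x. 2 * b^n * (cc * a^n))"
    proof (rule integral_le)
      show "(\<lambda>x. 2 * b^n * (cc * a^n)) integrable_on {?u..?m}" by (rule integrable_const_ivl)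
      show "g integrable_on {?u..?m}" by (rule gi)
      fix x assume x: "x \<in> {?u..?m}"
      have "of_int (int J) \<le> b^n * x" "b^n * x \<le> of_int (int J) + 1/2"
        using x Lp unfolding L(1)[symmetric] by (auto simp: field_simps)
      thus "2 * b^n * (cc * a^n) \<le> g x" by (rule gl)
    qed
    also have "integral {?u..?m} (\<lambda>x. 2 * b^n * (cc * a^n)) = cc * a^n"
      using o1 Lp unfolding L(1)[symmetric] by (simp add: content_real field_simps)
    finally have h1: "integral {?u..?m} g \<ge> cc * a^n" .
    have h2: "integral {?m..?v} g \<ge> 0" using g0 by (intro integral_nonneg gi) auto
    have "integral {0..?v} g = integral {0..?u} g + integral {?u..?v} g"
      using o1 Henstock_Kurzweil_Integration.integral_combine[where a=0 and c="?u" and b="?v" and f=g] gi[of 0 "?v"] by linarith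
    also have "integral {?u..?v} g = integral {?u..?m} g + integral {?m..?v} g"
      using o1 Henstock_Kurzweil_Integration.integral_combine[where a="?u" and c="?m" and b="?v" and f=g] gi[of "?u" "?v"] by linarith
    finally have "integral {0..?v} g = integral {0..?u} g + integral {?u..?m} g + integral {?m..?v} g"
      by simp
    moreover have "integral {0..?u} g \<ge> real J * (cc * a^n)" using Suc by simp
    ultimately show ?case using h1 h2 by (simp add: algebra_simps)
  qed
  have Lp0: "real L / real L = 1" using L(2) by simp
  have "integral {0..real L / real L} g \<ge> real L * (cc * a^n)" by (rule main) simp
  hence "integral {0..1} g \<ge> b^n * (cc * a^n)" using L Lp0 by simp
  thus ?thesis unfolding g_def[abs_def] t_def by (simp add: power_mult_distrib algebra_simps)
qed

lemma Limsup_int: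
  assumes M: "M \<ge> 1"
  shows "Limsup (at 0) (\<lambda>t. ereal (1 / (2 * M) *
              integral {-M..M} (\<lambda>x. \<bar>(F a b (x + t) - F a b x) / t\<bar>))) = \<infinity>"
proof (rule Limsup_at0_infty)
  fix B d :: real assume d: "d > 0"
  have q1: "a * b > 1" using ab by simp
  have b1: "b > 1" using b4 by simp
  have c1: "cc / (2*M) > 0" using cc_pos M by simp
  obtain n where n: "B \<le> cc / (2*M) * (a*b)^n" "1 / (2 * b^n) < d"
    using choose_n[OF q1 b1 c1 d, of B] by blast
  define t where "t = 1/(2*b^n)"
  have tpos: "t > 0" using b4 by (simp add: t_def)
  have "integral {0..1} (\<lambda>x. \<bar>(F a b (x + t) - F a b x) / t\<bar>)
       \<le> integral {-M..M} (\<lambda>x. \<bar>(F a b (x + t) - F a b x) / t\<bar>)"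
    using M by (intro integral_subset_le g_int) auto
  hence "cc * (a*b)^n \<le> integral {-M..M} (\<lambda>x. \<bar>(F a b (x + t) - F a b x) / t\<bar>)"
    using int_lower[of n] unfolding t_def by linarith
  hence "cc / (2*M) * (a*b)^n \<le> 1 / (2 * M) * integral {-M..M} (\<lambda>x. \<bar>(F a b (x + t) - F a b x) / t\<bar>)"
    using M by (simp add: field_simps)
  thus "\<exists>t. t \<noteq> 0 \<and> \<bar>t\<bar> < d \<and> B \<le> 1 / (2 * M) * integral {-M..M} (\<lambda>x. \<bar>(F a b (x + t) - F a b x) / t\<bar>)"
    using n tpos b4 unfolding t_def by (intro exI[of _ t]) (auto simp: t_def)
qed

lemma not_bv: "\<not> bv_on (F a b) 0 1"
proof
  assume "bv_on (F a b) 0 1"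
  then obtain B where B: "\<And>(n::nat) xs. (\<forall>i\<le>n. 0 \<le> xs i \<and> xs i \<le> 1) \<and> (\<forall>i<n. xs i \<le> xs (Suc i)) \<Longrightarrow>
      (\<Sum>i<n. \<bar>F a b (xs (Suc i)) - F a b (xs i)\<bar>) \<le> B"
    unfolding bv_on_def by blast
  have q1: "a * b > 1" using ab by simp
  have b1: "b > 1" using b4 by simp
  obtain n where n: "B + 1 \<le> cc * (a*b)^n"
    using choose_n[OF q1 b1 cc_pos zero_less_one, of "B+1"] by blast
  obtain L :: nat where L: "real L = b^n" "L > 0" using L_ex by blast
  define xs where "xs i = real i / (2 * real L)" for i
  have Lp: "real L > 0" using L by simp
  have "(\<Sum>i<2*L. \<bar>F a b (xs (Suc i)) - F a b (xs i)\<bar>) \<le> B"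
    by (rule B) (use Lp in \<open>auto simp: xs_def field_simps\<close>)
  moreover have "(\<Sum>i<2*L. \<bar>F a b (xs (Suc i)) - F a b (xs i)\<bar>)
     = (\<Sum>j<L. \<bar>F a b (xs (Suc (2*j))) - F a b (xs (2*j))\<bar> + \<bar>F a b (xs (Suc (2*j+1))) - F a b (xs (2*j+1))\<bar>)"
    by (rule sum_even_odd)
  moreover have "(\<Sum>j<L. \<bar>F a b (xs (Suc (2*j))) - F a b (xs (2*j))\<bar> + \<bar>F a b (xs (Suc (2*j+1))) - F a b (xs (2*j+1))\<bar>)
      \<ge> (\<Sum>j<L. cc * a^n)"
  proof (rule sum_mono)
    fix j
    have e: "xs (Suc (2*j)) = xs (2*j) + 1 / (2 * b^n)" using Lp unfolding xs_def L(1)[symmetric]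
      by (simp add: field_simps)
    have "b^n * xs (2*j) = of_int (int j)" using Lp unfolding xs_def L(1)[symmetric] by (simp add: field_simps)
    hence "\<bar>F a b (xs (2*j) + 1 / (2 * b^n)) - F a b (xs (2*j))\<bar> \<ge> cc * a^n"
      by (intro good_point[of "int j"]) auto
    thus "cc * a^n \<le> \<bar>F a b (xs (Suc (2*j))) - F a b (xs (2*j))\<bar> + \<bar>F a b (xs (Suc (2*j+1))) - F a b (xs (2*j+1))\<bar>"
      unfolding e by linarith
  qed
  moreover have "(\<Sum>j<L. cc * a^n) = cc * (a*b)^n" using L by (simp add: power_mult_distrib)
  ultimately show False using n by linarith
qed

end

theorem corollary2:
  fixes \<alpha> :: real and \<nu> :: nat
  assumes "0 < \<alpha>" "\<alpha> < 1" and "2 * real \<nu> > 1 / (1 - \<alpha>)"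
  shows "(\<forall>x \<beta>. \<alpha> < \<beta> \<and> \<beta> \<le> 1 \<longrightarrow>
            Limsup (at 0) (\<lambda>t. ereal (\<bar>K \<alpha> \<nu> (x + t) - K \<alpha> \<nu> x\<bar> / \<bar>t\<bar> powr \<beta>)) = \<infinity>
            \<and> \<not> holder_at (K \<alpha> \<nu>) \<beta> x)
       \<and> (\<forall>x. \<not> (K \<alpha> \<nu>) differentiable (at x))
       \<and> (\<forall>M::real. M \<ge> 1 \<longrightarrow>
            Limsup (at 0) (\<lambda>t. ereal (1 / (2 * M) *
              integral {-M..M} (\<lambda>x. \<bar>(K \<alpha> \<nu> (x + t) - K \<alpha> \<nu> x) / t\<bar>))) = \<infinity>)
       \<and> \<not> locally_bv (K \<alpha> \<nu>)"
proof -
  define b :: real where "b = 4^\<nu>"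
  define a where "a = b powr (-\<alpha>)"
  have a1: "1 - \<alpha> > 0" using assms by simp
  have h2: "2 * real \<nu> * (1 - \<alpha>) > 1" using assms(3) a1 by (simp add: field_simps)
  have N1: "1 \<le> \<nu>" using h2 a1 by (cases \<nu>) auto
  have b2: "b = 2 powr (2 * real \<nu>)"
  proof -
    have "b = 2^(2*\<nu>)" by (simp add: b_def power_mult)
    also have "\<dots> = 2 powr real (2*\<nu>)" by (rule powr_realpow[symmetric]) simp
    finally show ?thesis by simp
  qed
  have bpos: "b > 0" by (simp add: b_def)
  have ab: "a * b > 2"
  proof -
    have "a * b = b powr (-\<alpha>) * b powr 1" using bpos by (simp add: a_def)
    also have "\<dots> = b powr (1 - \<alpha>)"
      by (simp only: diff_conv_add_uminus powr_add mult.commute)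
    also have "\<dots> = 2 powr (2 * real \<nu> * (1 - \<alpha>))" by (simp add: b2 powr_powr)
    also have "\<dots> > 2 powr 1" using h2 by (intro powr_less_mono) auto
    finally show ?thesis by simp
  qed
  have KF: "K \<alpha> \<nu> = F a b"
  proof
    fix x
    have "\<And>k. 2 powr (- 2 * \<alpha> * real \<nu> * real k) * phi (2 ^ (2 * \<nu> * k) * x) = a^k * phi (b^k * x)"
    proof -
      fix k
      have "a^k = b powr (real k * - \<alpha>)" using bpos by (simp add: a_def powr_power)
      also have "\<dots> = 2 powr (- 2 * \<alpha> * real \<nu> * real k)" by (simp add: b2 powr_powr mult_ac)
      finally have e1: "a^k = 2 powr (- 2 * \<alpha> * real \<nu> * real k)" .
      have e2: "b^k = 2 ^ (2 * \<nu> * k)"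
        by (simp add: b_def power_mult[symmetric] mult.assoc power_mult[of "2::real" 2])
      show "2 powr (- 2 * \<alpha> * real \<nu> * real k) * phi (2 ^ (2 * \<nu> * k) * x) = a^k * phi (b^k * x)"
        by (simp add: e1 e2)
    qed
    thus "K \<alpha> \<nu> x = F a b x" by (simp add: K_def F_def)
  qed
  note ctx = assms(1) assms(2) b_def N1 a_def ab
  show ?thesis unfolding KF locally_bv_def
    using Limsup_ratio[OF ctx] not_holder[OF ctx] not_diff[OF ctx] Limsup_int[OF ctx] not_bv[OF ctx]
    by blast
qed

end
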